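(* Consider the four-stage implicit Runge–Kutta method with Butcher tableau $(\mathbf c,\mathbf A,\mathbf b)$ given by \[ \begin{array}{c|cccc} 0 & 0 & 0 & 0 & 0 \\ \frac 1 3 & \frac{47}{360} & \frac{89}{360} & -\frac{19}{360} & \frac{3}{360} \\ \frac 2 3 & \frac{21}{180} & \frac{77}{180} & \frac{23}{180} & -\frac{1}{180} \\ 1 & \frac 1 8 & \frac 3 8 & \frac 3 8 & \frac 1 8 \\ \hline & \frac 1 8 & \frac 3 8 & \frac 3 8 & \frac 1 8 \end{array} \] This method is stiffly accurate and has explicit first line; it is A-stable; its order of convergence is $p=4$; and its stage order is $\tilde q=3$.
   Context: An $s$-stage Runge–Kutta method with Butcher tableau $\mathbf c=(c_i)$, $\mathbf A=(a_{i,j})$, $\mathbf b=(b_i)$ applied to the initial value problem $y'(x)=f(x,y(x))$, $y(a)=y_a$, with step size $h$ and grid $x_n=a+nh$, computes $y_{n+1}=y_n+h\sum_{i=1}^s b_iK_i$, where $K_i=f\big(x_n+hc_i,\ y_n+h\sum_{j=1}^s a_{i,j}K_j\big)$, $i=1,\dots,s$. The method has order $p$ if its local truncation error is $\mathcal O(h^{p+1})$ (equivalently, all Butcher order conditions up to order $p$ hold). The method has explicit first line if $a_{1,1}=\dots=a_{1,s}=0$, and is stiffly accurate if $a_{s,i}=b_i$ for all $i=1,\dots,s$. Its stability function is $R(z)=\det(\mathbf I-z\mathbf A+z\mathbf e\mathbf b^T)/\det(\mathbf I-z\mathbf A)$ (with $\mathbf I$ the identity matrix and $\mathbf e$ the vector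 of ones), i.e. applying the method to $y'=\lambda y$ gives $y_{n+1}=R(h\lambda)y_n$; the method is A-stable if its stability domain $\{z\in\mathbb C:|R(z)|\le 1\}$ contains the left half-plane $\{z:\mathrm{Re}(z)\le 0\}$. Simplifying conditions: $B(p)$: $\sum_{i=1}^s b_ic_i^{k-1}=1/k$ for $k=1,\dots,p$; $C(q)$: $\sum_{j=1}^s a_{i,j}c_j^{k-1}=c_i^k/k$ for $k=1,\dots,q$, $i=1,\dots,s$. The stage order is the maximal integer $\tilde q$ such that $B(p)$ and $C(q)$ hold for $p=1,\dots,\tilde q$ and $q=1,\dots,\tilde q$. *)

theory Defs
  imports "HOL-Analysis.Analysis" "Jordan_Normal_Form.Determinant"
begin

text \<open>An s-stage Runge-Kutta method is given by a Butcher tableau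
  A :: nat => nat => real, b :: nat => real, c :: nat => real, where the
  stages are indexed by 0, ..., s-1 (stage i+1 of the paper is index i).\<close>

definition explicit_first_line :: "nat \<Rightarrow> (nat \<Rightarrow> nat \<Rightarrow> real) \<Rightarrow> bool" where
  "explicit_first_line s A \<longleftrightarrow> (\<forall>j<s. A 0 j = 0)"

definition stiffly_accurate :: "nat \<Rightarrow> (nat \<Rightarrow> nat \<Rightarrow> real) \<Rightarrow> (nat \<Rightarrow> real) \<Rightarrow> bool" where
  "stiffly_accurate s A b \<longleftrightarrow> (\<forall>i<s. A (s - 1) i = b i)"

definition stab_num :: "nat \<Rightarrow> (nat \<Rightarrow> nat \<Rightarrow> real) \<Rightarrow> (nat \<Rightarrow> real) \<Rightarrow> complex \<Rightarrow> complex" where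
  "stab_num s A b z = det (mat s s (\<lambda>(i, j). (if i = j then 1 else 0)
        - z * complex_of_real (A i j) + z * complex_of_real (b j)))"

definition stab_den :: "nat \<Rightarrow> (nat \<Rightarrow> nat \<Rightarrow> real) \<Rightarrow> complex \<Rightarrow> complex" where
  "stab_den s A z = det (mat s s (\<lambda>(i, j). (if i = j then 1 else 0)
        - z * complex_of_real (A i j)))"

definition stab_fun :: "nat \<Rightarrow> (nat \<Rightarrow> nat \<Rightarrow> real) \<Rightarrow> (nat \<Rightarrow> real) \<Rightarrow> complex \<Rightarrow> complex" where
  "stab_fun s A b z = stab_num s A b z / stab_den s A z"

definition stab_domain :: "nat \<Rightarrow> (nat \<Rightarrow> nat \<Rightarrow> real) \<Rightarrow> (nat \<Rightarrow> real) \<Rightarrow> complex set" where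
  "stab_domain s A b = {z. stab_den s A z \<noteq> 0 \<and> cmod (stab_fun s A b z) \<le> 1}"

definition A_stable :: "nat \<Rightarrow> (nat \<Rightarrow> nat \<Rightarrow> real) \<Rightarrow> (nat \<Rightarrow> real) \<Rightarrow> bool" where
  "A_stable s A b \<longleftrightarrow> {z. Re z \<le> 0} \<subseteq> stab_domain s A b"

datatype rtree = RNode "rtree list"

fun rt_order :: "rtree \<Rightarrow> nat" where
  "rt_order (RNode ts) = 1 + sum_list (map rt_order ts)"

fun rt_gamma :: "rtree \<Rightarrow> nat" where
  "rt_gamma (RNode ts) = rt_order (RNode ts) * prod_list (map rt_gamma ts)"

fun rt_stage_weight :: "nat \<Rightarrow> (nat \<Rightarrow> nat \<Rightarrow> real) \<Rightarrow> rtree \<Rightarrow> nat \<Rightarrow> real" where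
  "rt_stage_weight s A (RNode ts) i =
     prod_list (map (\<lambda>u. \<Sum>j<s. A i j * rt_stage_weight s A u j) ts)"

definition elem_weight :: "nat \<Rightarrow> (nat \<Rightarrow> nat \<Rightarrow> real) \<Rightarrow> (nat \<Rightarrow> real) \<Rightarrow> rtree \<Rightarrow> real" where
  "elem_weight s A b t = (\<Sum>i<s. b i * rt_stage_weight s A t i)"

text \<open>All Butcher order conditions up to order p hold (together with the
  row-sum condition c_i = sum_j a_ij, under which the tree conditions are the
  order conditions for the non-autonomous problem y' = f(x, y)).\<close>

definition rk_order_conditions ::
  "nat \<Rightarrow> (nat \<Rightarrow> real) \<Rightarrow> (nat \<Rightarrow> nat \<Rightarrow> real) \<Rightarrow> (nat \<Rightarrow> real) \<Rightarrow> nat \<Rightarrow> bool" where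
  "rk_order_conditions s c A b p \<longleftrightarrow>
     (\<forall>i<s. c i = (\<Sum>j<s. A i j)) \<and>
     (\<forall>t. rt_order t \<le> p \<longrightarrow> elem_weight s A b t = 1 / real (rt_gamma t))"

definition rk_order :: "nat \<Rightarrow> (nat \<Rightarrow> real) \<Rightarrow> (nat \<Rightarrow> nat \<Rightarrow> real) \<Rightarrow> (nat \<Rightarrow> real) \<Rightarrow> nat \<Rightarrow> bool" where
  "rk_order s c A b p \<longleftrightarrow>
     rk_order_conditions s c A b p \<and> \<not> rk_order_conditions s c A b (Suc p)"

definition cond_B :: "nat \<Rightarrow> (nat \<Rightarrow> real) \<Rightarrow> (nat \<Rightarrow> real) \<Rightarrow> nat \<Rightarrow> bool" where
  "cond_B s c b p \<longleftrightarrow> (\<forall>k\<in>{1..p}. (\<Sum>i<s. b i * c i ^ (k - 1)) = 1 / real k)"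

definition cond_C :: "nat \<Rightarrow> (nat \<Rightarrow> real) \<Rightarrow> (nat \<Rightarrow> nat \<Rightarrow> real) \<Rightarrow> nat \<Rightarrow> bool" where
  "cond_C s c A q \<longleftrightarrow>
     (\<forall>k\<in>{1..q}. \<forall>i<s. (\<Sum>j<s. A i j * c j ^ (k - 1)) = c i ^ k / real k)"

definition stage_order :: "nat \<Rightarrow> (nat \<Rightarrow> real) \<Rightarrow> (nat \<Rightarrow> nat \<Rightarrow> real) \<Rightarrow> (nat \<Rightarrow> real) \<Rightarrow> nat \<Rightarrow> bool" where
  "stage_order s c A b q \<longleftrightarrow>
     (\<forall>p\<in>{1..q}. cond_B s c b p \<and> cond_C s c A p) \<and>
     \<not> (cond_B s c b (Suc q) \<and> cond_C s c A (Suc q))"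

definition tab_c :: "nat \<Rightarrow> real" where
  "tab_c i = (if i < 4 then [0, 1/3, 2/3, 1] ! i else 0)"

definition tab_A :: "nat \<Rightarrow> nat \<Rightarrow> real" where
  "tab_A i j = (if i < 4 \<and> j < 4 then
     [[0, 0, 0, 0],
      [47/360, 89/360, -19/360, 3/360],
      [21/180, 77/180, 23/180, -1/180],
      [1/8, 3/8, 3/8, 1/8]] ! i ! j else 0)"

definition tab_b :: "nat \<Rightarrow> real" where
  "tab_b j = (if j < 4 then [1/8, 3/8, 3/8, 1/8] ! j else 0)"

end

theory Submission
  imports Defs
begin

lemma det_row0:
  fixes f :: "nat \<times> nat \<Rightarrow> 'a::comm_ring_1"
  shows "det (mat (Suc n) (Suc n) f) = (\<Sum>j<Suc n. f (0,j) * (-1)^j *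
     det (mat n n (\<lambda>(i,k). f (Suc i, if k < j then k else Suc k))))"
proof -
  have "det (mat (Suc n) (Suc n) f) = (\<Sum>j<Suc n. mat (Suc n) (Suc n) f $$ (0,j) * cofactor (mat (Suc n) (Suc n) f) 0 j)"
    by (rule laplace_expansion_row) auto
  also have "\<dots> = (\<Sum>j<Suc n. f (0,j) * (-1)^j *
     det (mat n n (\<lambda>(i,k). f (Suc i, if k < j then k else Suc k))))"
  proof (rule sum.cong[OF refl])
    fix j assume j: "j \<in> {..<Suc n}"
    have "mat_delete (mat (Suc n) (Suc n) f) 0 j = mat n n (\<lambda>(i,k). f (Suc i, if k < j then k else Suc k))"
      by (rule eq_matI) (auto simp: mat_delete_def)
    then show "mat (Suc n) (Suc n) f $$ (0,j) * cofactor (mat (Suc n) (Suc n) f) 0 j = f (0,j) * (-1)^j *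
     det (mat n n (\<lambda>(i,k). f (Suc i, if k < j then k else Suc k)))"
      using j by (simp add: cofactor_def)
  qed
  finally show ?thesis .
qed

lemma det1: "det (mat (Suc 0) (Suc 0) f) = (f (0,0) :: 'a::comm_ring_1)"
  by (simp add: det_row0)

lemma det2: "det (mat 2 2 f) = (f (0,0) * f(1,1) - f(0,1) * f(1,0) :: 'a::comm_ring_1)"
  by (simp add: det_row0 numeral_2_eq_2 det1)

lemma det3: "det (mat 3 3 f) = (f(0,0)*(f(1,1)*f(2,2)-f(1,2)*f(2,1)) - f(0,1)*(f(1,0)*f(2,2)-f(1,2)*f(2,0)) + f(0,2)*(f(1,0)*f(2,1)-f(1,1)*f(2,0)) :: 'a::comm_ring_1)"
proof -
  have e: "(3::nat) = Suc 2" by simp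
  show ?thesis unfolding e by (simp add: det_row0 det2 eval_nat_numeral algebra_simps)
qed

lemma det4:
  fixes f :: "nat \<times> nat \<Rightarrow> 'a::comm_ring_1"
  shows "det (mat 4 4 f) =
   f(0,0)*(f(1,1)*(f(2,2)*f(3,3)-f(2,3)*f(3,2)) - f(1,2)*(f(2,1)*f(3,3)-f(2,3)*f(3,1)) + f(1,3)*(f(2,1)*f(3,2)-f(2,2)*f(3,1)))
 - f(0,1)*(f(1,0)*(f(2,2)*f(3,3)-f(2,3)*f(3,2)) - f(1,2)*(f(2,0)*f(3,3)-f(2,3)*f(3,0)) + f(1,3)*(f(2,0)*f(3,2)-f(2,2)*f(3,0)))
 + f(0,2)*(f(1,0)*(f(2,1)*f(3,3)-f(2,3)*f(3,1)) - f(1,1)*(f(2,0)*f(3,3)-f(2,3)*f(3,0)) + f(1,3)*(f(2,0)*f(3,1)-f(2,1)*f(3,0)))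
 - f(0,3)*(f(1,0)*(f(2,1)*f(3,2)-f(2,2)*f(3,1)) - f(1,1)*(f(2,0)*f(3,2)-f(2,2)*f(3,0)) + f(1,2)*(f(2,0)*f(3,1)-f(2,1)*f(3,0)))"
proof -
  have e: "(4::nat) = Suc 3" by simp
  show ?thesis unfolding e by (simp add: det_row0 det3 eval_nat_numeral algebra_simps)
qed


lemma sum4: "(\<Sum>j<4::nat. f j) = f 0 + f 1 + f 2 + (f 3 :: 'a::comm_monoid_add)"
  by (simp add: eval_nat_numeral add.assoc)

lemma all4: "(\<forall>i<4::nat. P i) \<longleftrightarrow> P 0 \<and> P 1 \<and> P 2 \<and> P 3"
  by (auto simp: eval_nat_numeral less_Suc_eq)

lemma tabA_vals:
  "tab_A 0 0 = 0" "tab_A 0 1 = 0" "tab_A 0 2 = 0" "tab_A 0 3 = 0"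
  "tab_A 1 0 = 47/360" "tab_A 1 1 = 89/360" "tab_A 1 2 = -19/360" "tab_A 1 3 = 3/360"
  "tab_A 2 0 = 21/180" "tab_A 2 1 = 77/180" "tab_A 2 2 = 23/180" "tab_A 2 3 = -1/180"
  "tab_A 3 0 = 1/8" "tab_A 3 1 = 3/8" "tab_A 3 2 = 3/8" "tab_A 3 3 = 1/8"
  by (simp_all add: tab_A_def)

lemma tabb_vals: "tab_b 0 = 1/8" "tab_b 1 = 3/8" "tab_b 2 = 3/8" "tab_b 3 = 1/8"
  by (simp_all add: tab_b_def)

lemma tabc_vals: "tab_c 0 = 0" "tab_c 1 = 1/3" "tab_c 2 = 2/3" "tab_c 3 = 1"
  by (simp_all add: tab_c_def)

lemma tab_Suc0:
  "tab_A (Suc 0) j = tab_A 1 j" "tab_A j (Suc 0) = tab_A j 1"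
  "tab_b (Suc 0) = tab_b 1" "tab_c (Suc 0) = tab_c 1"
  by simp_all

lemmas tabA_vals' = tabA_vals[unfolded One_nat_def]
lemmas tabb_vals' = tabb_vals[unfolded One_nat_def]
lemmas tabc_vals' = tabc_vals[unfolded One_nat_def]

lemma num_eq: "stab_num 4 tab_A tab_b z = 1 + z/2 + z^2/10 + z^3/120"
  unfolding stab_num_def det4
  by (simp add: tabA_vals tabA_vals' tabb_vals tabb_vals' field_simps power3_eq_cube power2_eq_square)

lemma den_eq: "stab_den 4 tab_A z = 1 - z/2 + z^2/10 - z^3/120"
  unfolding stab_den_def det4
  by (simp add: tabA_vals tabA_vals' field_simps power3_eq_cube power2_eq_square)

lemma condC3: "cond_C 4 tab_c tab_A 3"
  unfolding cond_C_def all4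
proof
  fix k :: nat assume "k \<in> {1..3}"
  then have "k = 1 \<or> k = 2 \<or> k = 3" by auto
  then show "(\<Sum>j<4. tab_A 0 j * tab_c j ^ (k - 1)) = tab_c 0 ^ k / real k \<and>
    (\<Sum>j<4. tab_A 1 j * tab_c j ^ (k - 1)) = tab_c 1 ^ k / real k \<and>
    (\<Sum>j<4. tab_A 2 j * tab_c j ^ (k - 1)) = tab_c 2 ^ k / real k \<and>
    (\<Sum>j<4. tab_A 3 j * tab_c j ^ (k - 1)) = tab_c 3 ^ k / real k"
    by (elim disjE) (simp_all add: sum4 tabA_vals tabA_vals' tabc_vals tabc_vals' power2_eq_square power3_eq_cube power4_eq_xxxx)
qed

lemma condB4: "cond_B 4 tab_c tab_b 4"
  unfolding cond_B_def
proof
  fix k :: nat assume "k \<in> {1..4}"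
  then have "k = 1 \<or> k = 2 \<or> k = 3 \<or> k = 4" by auto
  then show "(\<Sum>i<4. tab_b i * tab_c i ^ (k - 1)) = 1 / real k"
    by (elim disjE) (simp_all add: sum4 tabb_vals tabb_vals' tabc_vals tabc_vals' power2_eq_square power3_eq_cube power4_eq_xxxx)
qed

lemma notC4: "\<not> cond_C 4 tab_c tab_A 4"
  unfolding cond_C_def
  apply (simp only: Ball_def)
  apply (rule notI)
  apply (drule spec[of _ 4])
  apply (simp only: all4 sum4)
  apply (simp add: tabA_vals tabA_vals' tabc_vals tabc_vals' power2_eq_square power3_eq_cube power4_eq_xxxx)
  done


lemma rt_order_pos: "rt_order t \<ge> 1"
  by (cases t) simp

lemma rt_gamma_pos: "rt_gamma t > 0"
proof (induction t)
  case (RNode ts)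
  have "prod_list (map rt_gamma ts) > 0"
    using RNode by (induction ts) auto
  then show ?case using rt_order_pos[of "RNode ts"] by simp
qed

lemma prod_list_pow_div:
  "prod_list (map (\<lambda>u. (x::real) ^ f u / real (g u)) ts) =
   x ^ sum_list (map f ts) / real (prod_list (map g ts))"
  by (induction ts) (auto simp: power_add)

lemma stage_weight_C:
  assumes C: "cond_C s c A q"
  shows "rt_order t \<le> Suc q \<Longrightarrow> i < s \<Longrightarrow>
    rt_stage_weight s A t i = c i ^ (rt_order t - 1) * real (rt_order t) / real (rt_gamma t)"
proof (induction t arbitrary: i)
  case (RNode ts)
  have inner: "(\<Sum>j<s. A i j * rt_stage_weight s A u j) = c i ^ rt_order u / real (rt_gamma u)"
    if u: "u \<in> set ts" for u
  proof -
    have ou: "rt_order u \<le> q" using RNode.prems(1) u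
      using member_le_sum_list[of "rt_order u" "map rt_order ts"] by auto
    have o1: "rt_order u \<ge> 1" by (rule rt_order_pos)
    have "(\<Sum>j<s. A i j * rt_stage_weight s A u j)
       = (\<Sum>j<s. A i j * c j ^ (rt_order u - 1)) * (real (rt_order u) / real (rt_gamma u))"
      unfolding sum_distrib_right
      by (rule sum.cong[OF refl]) (use RNode.IH[OF u] ou in auto)
    also have "(\<Sum>j<s. A i j * c j ^ (rt_order u - 1)) = c i ^ rt_order u / real (rt_order u)"
      using C ou o1 RNode.prems(2) unfolding cond_C_def by auto
    finally show ?thesis using o1 by simp
  qed
  have "rt_stage_weight s A (RNode ts) i = prod_list (map (\<lambda>u. c i ^ rt_order u / real (rt_gamma u)) ts)"
    by (simp cong: map_cong add: inner)
  also have "\<dots> = c i ^ sum_list (map rt_order ts) / real (prod_list (map rt_gamma ts))"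
    by (rule prod_list_pow_div)
  finally have X: "rt_stage_weight s A (RNode ts) i = c i ^ sum_list (map rt_order ts) / real (prod_list (map rt_gamma ts))" .
  have pos: "prod_list (map rt_gamma ts) > 0"
    using rt_gamma_pos by (induction ts) auto
  have "real (prod_list (map rt_gamma ts)) +
      real (sum_list (map rt_order ts)) * real (prod_list (map rt_gamma ts)) =
      (1 + real (sum_list (map rt_order ts))) * real (prod_list (map rt_gamma ts))"
    by (simp add: algebra_simps)
  then show ?case using X pos by simp
qed

lemma order_cond_from_BC:
  assumes C: "cond_C s c A q" and B: "cond_B s c b p" and t: "rt_order t \<le> Suc q" "rt_order t \<le> p"
  shows "elem_weight s A b t = 1 / real (rt_gamma t)"
proof -
  have o1: "rt_order t \<ge> 1" by (rule rt_order_pos)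
  have "elem_weight s A b t = (\<Sum>i<s. b i * c i ^ (rt_order t - 1)) * (real (rt_order t) / real (rt_gamma t))"
    unfolding elem_weight_def sum_distrib_right
    by (rule sum.cong[OF refl]) (simp add: stage_weight_C[OF C t(1)])
  also have "(\<Sum>i<s. b i * c i ^ (rt_order t - 1)) = 1 / real (rt_order t)"
    using B t o1 unfolding cond_B_def by auto
  finally show ?thesis using o1 by simp
qed


lemma polyF: "(120 - 60*x + 12*(x^2-y^2) - (x^3-3*x*y^2))^2 + (-60*y + 24*x*y - (3*x^2*y - y^3))^2 = 14400 + 720*y^2 + 24*y^4 + y^6 + (-x)*(14400 + 720*y^2 + 24*y^4)
     + x^2*(6480 + 288*y^2 + 3*y^4) + (-x)^3*(1680 + 48*y^2) + x^4*(264 + 3*y^2)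
     + (-x)^5*24 + (x::real)^6"
  by (simp add: algebra_simps power2_eq_square power3_eq_cube power4_eq_xxxx eval_nat_numeral)

lemma polyE: "(120 - 60*x + 12*(x^2-y^2) - (x^3-3*x*y^2))^2 + (-60*y + 24*x*y - (3*x^2*y - y^3))^2
  - ((120 + 60*x + 12*(x^2-y^2) + (x^3-3*x*y^2))^2 + (60*y + 24*x*y + (3*x^2*y - y^3))^2)
  = (-x) * (28800 + 1440*y^2 + 48*y^4 + 3360*x^2 + 96*x^2*y^2 + 48*(x::real)^4)"
  by (simp add: algebra_simps power2_eq_square power3_eq_cube power4_eq_xxxx eval_nat_numeral)

lemma A_stab: "A_stable 4 tab_A tab_b"
  unfolding A_stable_def stab_domain_def
proof (intro subsetI CollectI, elim CollectE)
  fix z :: complex assume xz: "Re z \<le> 0"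
  define x where "x = Re z"
  define y where "y = Im z"
  have x: "x \<le> 0" using xz x_def by simp
  define rn where "rn = 120 + 60*x + 12*(x^2-y^2) + (x^3-3*x*y^2)"
  define iN where "iN = 60*y + 24*x*y + (3*x^2*y - y^3)"
  define rd where "rd = 120 - 60*x + 12*(x^2-y^2) - (x^3-3*x*y^2)"
  define iD where "iD = -60*y + 24*x*y - (3*x^2*y - y^3)"
  have N: "stab_num 4 tab_A tab_b z = Complex (rn/120) (iN/120)"
    unfolding num_eq rn_def iN_def x_def y_def
    by (simp add: complex_eq_iff power2_eq_square power3_eq_cube field_simps)
  have D: "stab_den 4 tab_A z = Complex (rd/120) (iD/120)"
    unfolding den_eq rd_def iD_def x_def y_def
    by (simp add: complex_eq_iff power2_eq_square power3_eq_cube field_simps)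
  have nN: "(cmod (stab_num 4 tab_A tab_b z))^2 = (rn^2 + iN^2) / 14400"
    unfolding N cmod_power2 by (simp add: power_divide add_divide_distrib)
  have nD: "(cmod (stab_den 4 tab_A z))^2 = (rd^2 + iD^2) / 14400"
    unfolding D cmod_power2 by (simp add: power_divide add_divide_distrib)
  have E: "rd^2 + iD^2 - (rn^2 + iN^2) = (-x) * (28800 + 1440*y^2 + 48*y^4 + 3360*x^2 + 96*x^2*y^2 + 48*x^4)"
    unfolding rn_def iN_def rd_def iD_def by (rule polyE)
  have "(-x) * (28800 + 1440*y^2 + 48*y^4 + 3360*x^2 + 96*x^2*y^2 + 48*x^4) \<ge> 0"
    using x by (intro mult_nonneg_nonneg) (auto intro!: add_nonneg_nonneg)
  then have "rn^2 + iN^2 \<le> rd^2 + iD^2" using E by linarith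
  then have le2: "(cmod (stab_num 4 tab_A tab_b z))^2 \<le> (cmod (stab_den 4 tab_A z))^2"
    unfolding nN nD by (rule divide_right_mono) simp
  have F: "rd^2 + iD^2 = 14400 + 720*y^2 + 24*y^4 + y^6 + (-x)*(14400 + 720*y^2 + 24*y^4)
     + x^2*(6480 + 288*y^2 + 3*y^4) + (-x)^3*(1680 + 48*y^2) + x^4*(264 + 3*y^2)
     + (-x)^5*24 + x^6"
    unfolding rd_def iD_def by (rule polyF)
  have "14400 \<le> rd^2 + iD^2"
  proof -
    have mx: "0 \<le> -x" using x by simp
    have y2: "0 \<le> y^2" "0 \<le> y^4" "0 \<le> y^6" "0 \<le> x^2" "0 \<le> x^4" "0 \<le> x^6"
      by (simp_all add: zero_le_even_power)
    have t1: "0 \<le> (-x)*(14400 + 720*y^2 + 24*y^4)"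
      using mx y2 by (intro mult_nonneg_nonneg) auto
    have t2: "0 \<le> x^2*(6480 + 288*y^2 + 3*y^4)"
      using y2 by (intro mult_nonneg_nonneg) auto
    have t3: "0 \<le> (-x)^3*(1680 + 48*y^2)"
      using mx y2 by (intro mult_nonneg_nonneg zero_le_power) auto
    have t4: "0 \<le> x^4*(264 + 3*y^2)"
      using y2 by (intro mult_nonneg_nonneg) auto
    have t5: "0 \<le> (-x)^5*24"
      using mx by (intro mult_nonneg_nonneg zero_le_power) auto
    show ?thesis unfolding F using t1 t2 t3 t4 t5 y2 by linarith
  qed
  then have "(cmod (stab_den 4 tab_A z))^2 \<ge> 1" using nD by simp
  then have dnz: "stab_den 4 tab_A z \<noteq> 0" by auto
  then have dpos: "cmod (stab_den 4 tab_A z) > 0" by simp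
  have "cmod (stab_num 4 tab_A tab_b z) \<le> cmod (stab_den 4 tab_A z)"
    using le2 by (rule power2_le_imp_le) simp
  then have "cmod (stab_fun 4 tab_A tab_b z) \<le> 1"
    unfolding stab_fun_def norm_divide using dpos by simp
  then show "stab_den 4 tab_A z \<noteq> 0 \<and> cmod (stab_fun 4 tab_A tab_b z) \<le> 1"
    using dnz by simp
qed


lemma cond_B_mono: "cond_B s c b p \<Longrightarrow> p' \<le> p \<Longrightarrow> cond_B s c b p'"
  unfolding cond_B_def by auto

lemma cond_C_mono: "cond_C s c A p \<Longrightarrow> p' \<le> p \<Longrightarrow> cond_C s c A p'"
  unfolding cond_C_def by auto

lemma rowsum: "\<forall>i<4. tab_c i = (\<Sum>j<4. tab_A i j)"
  using condC3 unfolding cond_C_def by (auto dest!: bspec[of _ _ 1])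

lemma order4: "rk_order_conditions 4 tab_c tab_A tab_b 4"
  unfolding rk_order_conditions_def
  using rowsum order_cond_from_BC[OF condC3 condB4] by auto

definition leaf :: rtree where "leaf = RNode []"

lemma not_order5: "\<not> rk_order_conditions 4 tab_c tab_A tab_b 5"
proof
  assume h: "rk_order_conditions 4 tab_c tab_A tab_b 5"
  let ?t = "RNode [leaf, leaf, leaf, leaf]"
  have o: "rt_order ?t = 5" "rt_gamma ?t = 5" by (simp_all add: leaf_def)
  have w: "rt_stage_weight 4 tab_A ?t i = (\<Sum>j<4. tab_A i j) ^ 4" for i
    by (simp add: leaf_def eval_nat_numeral)
  have "elem_weight 4 tab_A tab_b ?t = 1 / 5"
    using h o unfolding rk_order_conditions_def by auto
  then show False
    unfolding elem_weight_def w sum4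
    by (simp add: sum4 tabA_vals tabA_vals' tabb_vals tabb_vals' power4_eq_xxxx)
qed

theorem theorem3p1:
  shows "stiffly_accurate 4 tab_A tab_b \<and> explicit_first_line 4 tab_A \<and>
         A_stable 4 tab_A tab_b \<and> rk_order 4 tab_c tab_A tab_b 4 \<and>
         stage_order 4 tab_c tab_A tab_b 3"
proof (intro conjI)
  show "stiffly_accurate 4 tab_A tab_b"
    unfolding stiffly_accurate_def by (simp add: all4 tabA_vals tabb_vals tabA_vals' tabb_vals')
  show "explicit_first_line 4 tab_A"
    unfolding explicit_first_line_def by (simp add: all4 tabA_vals tabA_vals')
  show "A_stable 4 tab_A tab_b" by (rule A_stab)
  show "rk_order 4 tab_c tab_A tab_b 4"
    unfolding rk_order_def using order4 not_order5 by (simp add: eval_nat_numeral)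
  show "stage_order 4 tab_c tab_A tab_b 3"
    unfolding stage_order_def
    using condB4 condC3 notC4 cond_B_mono cond_C_mono by (auto simp: eval_nat_numeral)
qed

end
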